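(* For $i\in\{0,1\}$, let $N_i\subseteq W({\rm G}_2)$ be the stabilizer of the root $\beta_i$ under the action of $W({\rm G}_2)$ on $\Psi^+$ described in the context. Then for every $a\in N_i$ we have $ae_ia^{-1}=e_i$ in ${\rm Br}({\rm G}_2)$.
   Context: Let $\delta$ be an indeterminate. ${\rm Br}({\rm G}_2)$ is the $\mathbb{Z}[\delta^{\pm1}]$-algebra generated by $r_0,r_1,e_0,e_1$ subject to the following relations: - $r_0^2=r_1^2=1$; - $r_ie_i=e_ir_i=e_i$ for $i=0,1$; - $e_0^2=\delta^3e_0$ and $e_1^2=\delta e_1$; - $r_0e_1e_0=r_1e_0$ and $e_0e_1r_0=e_0r_1$; - $e_1r_0e_1r_0e_1=e_1$ and $e_1r_0e_1r_0r_1=e_1r_0r_1r_0$; - $e_0r_1e_0=\delta^2e_0$; - $r_1r_0e_1r_0e_1=r_0r_1r_0e_1$; - $(r_1r_0)^6=1$. Let $\Psi$ be a root system of type ${\rm G}_2$ with simple roots $\beta_0$ (short) and $\beta_1$ (long), and positive roots $\Psi^+=\{\beta_0,\beta_1,\beta_0+\beta_1,2\beta_0+\beta_1,3\beta_0+\beta_1,3\beta_0+2\beta_1\}$. $W({\rm G}_2)$ is generated by the reflections $s_0,s_1$ in $\beta_0,\beta_1$. It acts on $\Psi^+$ by $w\cdot\beta=$ the unique element of $\Psi^+\cap\{\pm w\beta\}$. The subgroup of units of ${\rm Br}({\rm G}_2)$ generated by $r_0,r_1$ is isomorphic to $W({\rm G}_2)$ via $r_i\mapsto s_i$. Through this isomorphism,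 elements of $W({\rm G}_2)$ are regarded as elements of ${\rm Br}({\rm G}_2)$. *)

theory Defs
  imports Main
begin

text \<open>Roots are coordinate pairs (c0, c1) meaning c0*beta0 + c1*beta1.
 beta0 short, beta1 long; Cartan integers <beta1,beta0^v> = -3, <beta0,beta1^v> = -1.\<close>

type_synonym root = "int \<times> int"

definition beta :: "nat \<Rightarrow> root" where
  "beta i = (if i = 0 then (1, 0) else (0, 1))"

definition neg_root :: "root \<Rightarrow> root" where
  "neg_root v = (- fst v, - snd v)"

definition Psi_pos :: "root set" where
  "Psi_pos = {(1,0), (0,1), (1,1), (2,1), (3,1), (3,2)}"

definition refl :: "nat \<Rightarrow> root \<Rightarrow> root" where
  "refl i v = (if i = 0 then (3 * snd v - fst v, snd v) else (fst v, fst v - snd v))"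

text \<open>An element of W(G2) is represented by a word [i1,...,ik] over {0,1},
  standing for s_{i1} ... s_{ik}; its linear action on the root lattice:\<close>
definition wact :: "nat list \<Rightarrow> root \<Rightarrow> root" where
  "wact w v = foldr refl w v"

definition wdot :: "nat list \<Rightarrow> root \<Rightarrow> root" where
  "wdot w v = (THE g. g \<in> Psi_pos \<and> (g = wact w v \<or> g = neg_root (wact w v)))"

definition is_word :: "nat list \<Rightarrow> bool" where
  "is_word w \<longleftrightarrow> set w \<subseteq> {0, 1}"

definition N_stab :: "nat \<Rightarrow> nat list set" where
  "N_stab i = {w. is_word w \<and> wdot w (beta i) = beta i}"

text \<open>Br(G2) is the Z[delta^{+-1}]-algebra presented by generators and relations,
 so an identity among the generators holds in Br(G2) iff it holds in every
 Z[delta^{+-1}]-algebra, i.e. every ring A with a central unit d, containing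
 elements r0 r1 e0 e1 satisfying the relations.\<close>

definition BrG2_rels :: "'a::ring_1 \<Rightarrow> 'a \<Rightarrow> 'a \<Rightarrow> 'a \<Rightarrow> 'a \<Rightarrow> bool" where
  "BrG2_rels d r0 r1 e0 e1 \<longleftrightarrow>
     (\<forall>x. d * x = x * d) \<and> (\<exists>d'. d * d' = 1 \<and> d' * d = 1) \<and>
     r0 * r0 = 1 \<and> r1 * r1 = 1 \<and>
     r0 * e0 = e0 \<and> e0 * r0 = e0 \<and> r1 * e1 = e1 \<and> e1 * r1 = e1 \<and>
     e0 * e0 = d ^ 3 * e0 \<and> e1 * e1 = d * e1 \<and>
     r0 * e1 * e0 = r1 * e0 \<and> e0 * e1 * r0 = e0 * r1 \<and>
     e1 * r0 * e1 * r0 * e1 = e1 \<and> e1 * r0 * e1 * r0 * r1 = e1 * r0 * r1 * r0 \<and>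
     e0 * r1 * e0 = d ^ 2 * e0 \<and>
     r1 * r0 * e1 * r0 * e1 = r0 * r1 * r0 * e1 \<and>
     (r1 * r0) ^ 6 = 1"

definition weval :: "'a::ring_1 \<Rightarrow> 'a \<Rightarrow> nat list \<Rightarrow> 'a" where
  "weval r0 r1 w = foldr (\<lambda>i x. (if i = 0 then r0 else r1) * x) w 1"

end

theory Submission
  imports Defs
begin

definition LL :: "nat list list" where
  "LL = [[], [0], [1], [0,1], [1,0], [0,1,0], [1,0,1], [0,1,0,1], [1,0,1,0],
         [0,1,0,1,0], [1,0,1,0,1], [0,1,0,1,0,1]]"

definition red :: "nat \<Rightarrow> nat list \<Rightarrow> nat list" where
  "red i c = (if c \<noteq> [] \<and> hd c = i then tl c
     else if i = 1 \<and> c = [0,1,0,1,0] then [0,1,0,1,0,1]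
     else if i = 1 \<and> c = [0,1,0,1,0,1] then [0,1,0,1,0]
     else i # c)"

lemma weval_Cons: "weval r0 r1 (i # c) = (if i = 0 then r0 else r1) * weval r0 r1 c"
  by (simp add: weval_def)

lemma weval_Nil: "weval r0 r1 [] = 1"
  by (simp add: weval_def)

lemma wact_Cons: "wact (i # c) v = refl i (wact c v)"
  by (simp add: wact_def)

lemma wact_Nil: "wact [] v = v"
  by (simp add: wact_def)

lemma red_wact:
  assumes "c \<in> set LL" "i \<in> {0,1::nat}"
  shows "wact (i # c) v = wact (red i c) v"
  using assms unfolding LL_def
  apply (simp only: set_simps insert_iff empty_iff)
  apply (elim disjE)
  by (simp_all add: red_def wact_Cons wact_Nil refl_def)

lemma wdot_eq:
  assumes "g \<in> Psi_pos" "g = wact w v \<or> g = neg_root (wact w v)"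
  shows "wdot w v = g"
  unfolding wdot_def
proof (rule the_equality)
  show "g \<in> Psi_pos \<and> (g = wact w v \<or> g = neg_root (wact w v))" using assms by blast
next
  fix g' assume "g' \<in> Psi_pos \<and> (g' = wact w v \<or> g' = neg_root (wact w v))"
  thus "g' = g" using assms
    by (cases "wact w v") (auto simp: Psi_pos_def neg_root_def)
qed

lemma wdot_pos: "wact w v \<in> Psi_pos \<Longrightarrow> wdot w v = wact w v"
  by (rule wdot_eq) auto
lemma wdot_neg: "neg_root (wact w v) \<in> Psi_pos \<Longrightarrow> wdot w v = neg_root (wact w v)"
  by (rule wdot_eq) auto

context
  fixes d r0 r1 e0 e1 :: "'a::ring_1"
  assumes R: "BrG2_rels d r0 r1 e0 e1"
begin

lemma r00: "r0 * (r0 * x) = x"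
  using R unfolding BrG2_rels_def by (metis mult.assoc mult_1_left)
lemma r11: "r1 * (r1 * x) = x"
  using R unfolding BrG2_rels_def by (metis mult.assoc mult_1_left)

lemma r00': "r0 * r0 = 1"
  using R unfolding BrG2_rels_def by blast
lemma r11': "r1 * r1 = 1"
  using R unfolding BrG2_rels_def by blast

lemma braid1: "r1 * (r0 * (r1 * (r0 * (r1 * r0)))) = r0 * (r1 * (r0 * (r1 * (r0 * r1))))"
proof -
  define A where "A = r1 * (r0 * (r1 * (r0 * (r1 * r0))))"
  define B where "B = r0 * (r1 * (r0 * (r1 * (r0 * r1))))"
  have h6: "(r1 * r0) ^ 6 = 1" using R unfolding BrG2_rels_def by blast
  have "(r1 * r0) ^ 6 = A * A"
    by (simp add: numeral_eq_Suc mult.assoc A_def)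
  hence AA: "A * A = 1" using h6 by simp
  have BA: "B * A = 1" by (simp add: A_def B_def mult.assoc r00 r11 r00' r11')
  have "B = (B * A) * A" by (simp add: mult.assoc AA)
  also have "\<dots> = A" by (simp add: BA)
  finally show ?thesis by (simp add: A_def B_def)
qed

lemma braid: "r1 * (r0 * (r1 * (r0 * (r1 * (r0 * x))))) = r0 * (r1 * (r0 * (r1 * (r0 * (r1 * x)))))"
  using arg_cong[OF braid1, of "\<lambda>y. y * x"] by (simp add: mult.assoc)

lemma red_ok:
  assumes "c \<in> set LL" "i \<in> {0,1::nat}"
  shows "red i c \<in> set LL \<and> weval r0 r1 (i # c) = weval r0 r1 (red i c)"
  using assms unfolding LL_def
  apply (simp only: set_simps insert_iff empty_iff)
  apply (elim disjE)
  by (simp_all add: red_def weval_Cons weval_Nil mult.assoc r00 r11 r00' r11' braid braid1)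

lemma rels:
  "r0 * (e0 * x) = e0 * x" "e0 * (r0 * x) = e0 * x" "e0 * r0 = e0"
  "r1 * (e1 * x) = e1 * x" "e1 * (r1 * x) = e1 * x" "e1 * r1 = e1"
  "r0 * (e1 * (e0 * x)) = r1 * (e0 * x)"
  "e0 * (e1 * (r0 * x)) = e0 * (r1 * x)"
  "e1 * (r0 * (e1 * (r0 * (e1 * x)))) = e1 * x"
  "e1 * (r0 * (e1 * (r0 * (r1 * x)))) = e1 * (r0 * (r1 * (r0 * x)))"
  "r1 * (r0 * (e1 * (r0 * (e1 * x)))) = r0 * (r1 * (r0 * (e1 * x)))"
proof -
  have H: "r0 * e0 = e0 \<and> e0 * r0 = e0 \<and> r1 * e1 = e1 \<and> e1 * r1 = e1 \<and>
     r0 * e1 * e0 = r1 * e0 \<and> e0 * e1 * r0 = e0 * r1 \<and>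
     e1 * r0 * e1 * r0 * e1 = e1 \<and> e1 * r0 * e1 * r0 * r1 = e1 * r0 * r1 * r0 \<and>
     r1 * r0 * e1 * r0 * e1 = r0 * r1 * r0 * e1"
    using R unfolding BrG2_rels_def by blast
  show "r0 * (e0 * x) = e0 * x" "e0 * (r0 * x) = e0 * x" "e0 * r0 = e0"
  "r1 * (e1 * x) = e1 * x" "e1 * (r1 * x) = e1 * x" "e1 * r1 = e1"
    using H by (metis mult.assoc)+
  show "r0 * (e1 * (e0 * x)) = r1 * (e0 * x)"
    "e0 * (e1 * (r0 * x)) = e0 * (r1 * x)"
    "e1 * (r0 * (e1 * (r0 * (e1 * x)))) = e1 * x"
    using H by (metis mult.assoc)+
  have "e1 * r0 * e1 * r0 * r1 * x = e1 * r0 * r1 * r0 * x" using H by simp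
  thus "e1 * (r0 * (e1 * (r0 * (r1 * x)))) = e1 * (r0 * (r1 * (r0 * x)))" by (simp add: mult.assoc)
  have "r1 * r0 * e1 * r0 * e1 * x = r0 * r1 * r0 * e1 * x" using H by simp
  thus "r1 * (r0 * (e1 * (r0 * (e1 * x)))) = r0 * (r1 * (r0 * (e1 * x)))" by (simp add: mult.assoc)
qed

lemma V1: "r1 * (r0 * (r1 * (r0 * (r1 * (e0 * x))))) = e0 * x"
proof -
  have "r1 * (r0 * (r1 * (r0 * (r1 * (e0 * x))))) = r1 * (r0 * (r1 * (r0 * (r0 * (e1 * (e0 * x))))))"
    by (simp add: rels(7))
  also have "\<dots> = r1 * (r0 * (e1 * (e0 * x)))" by (simp add: r00 rels(4))
  also have "\<dots> = e0 * x" by (simp add: rels(7) r11)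
  finally show ?thesis .
qed

lemma V2: "e0 * (r1 * (r0 * (r1 * (r0 * (r1 * x))))) = e0 * x"
proof -
  have "e0 * (r1 * (r0 * (r1 * (r0 * (r1 * x))))) = e0 * (e1 * (r0 * (r0 * (r1 * (r0 * (r1 * x))))))"
    by (simp add: rels(8))
  also have "\<dots> = e0 * (e1 * (r0 * (r1 * x)))" by (simp add: r00 rels(5))
  also have "\<dots> = e0 * x" by (simp add: rels(8) r11)
  finally show ?thesis .
qed

lemma V2': "e0 * (r1 * (r0 * (r1 * (r0 * r1)))) = e0"
  using V2[of 1] by simp

lemma T: "r0 * (r1 * (r0 * (e1 * (r0 * (r1 * (r0 * x)))))) = r1 * (r0 * (e1 * (r0 * (r1 * x))))"
proof -
  have "r0 * (r1 * (r0 * (e1 * (r0 * (r1 * (r0 * x)))))) = r1 * (r0 * (e1 * (r0 * (e1 * (r0 * (r1 * (r0 * x)))))))"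
    by (simp add: rels(11))
  also have "\<dots> = r1 * (r0 * (e1 * (r0 * (e1 * (r0 * (e1 * (r0 * (r1 * x))))))))"
    by (simp add: rels(10))
  also have "\<dots> = r1 * (r0 * (e1 * (r0 * (r1 * x))))" by (simp add: rels(9))
  finally show ?thesis .
qed

lemma V1': "r1 * (r0 * (r1 * (r0 * (r1 * e0)))) = e0"
  using V1[of 1] by simp
lemma r0e0: "r0 * e0 = e0" using rels(1)[of 1] by simp
lemma r1e1: "r1 * e1 = e1" using rels(4)[of 1] by simp

lemma L0a: "r0 * (e0 * r0) = e0" by (simp add: rels r0e0)
lemma L0b: "r1*(r0*(r1*(r0*(r1*(e0*(r1*(r0*(r1*(r0*r1))))))))) = e0"
  by (simp add: V1 V1' V2')
lemma L0c: "r0*(r1*(r0*(r1*(r0*(r1*(e0*(r1*(r0*(r1*(r0*(r1*r0))))))))))) = e0"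
  by (simp add: V1 V1' V2 rels r0e0)
lemma L1a: "r1*(e1*r1) = e1" by (simp add: rels r1e1)
lemma L1b: "r0*(r1*(r0*(r1*(r0*(e1*(r0*(r1*(r0*(r1*r0))))))))) = e1"
  using T[of "r1 * r0"] by (simp add: r00 r11 r11' r00')
lemma L1c: "r0*(r1*(r0*(r1*(r0*(r1*(e1*(r1*(r0*(r1*(r0*(r1*r0))))))))))) = e1"
  using L1b by (simp add: rels r1e1)

lemma nf: "is_word a \<Longrightarrow> \<exists>c\<in>set LL. weval r0 r1 a = weval r0 r1 c \<and> (\<forall>v. wact a v = wact c v)"
proof (induction a)
  case Nil
  show ?case by (rule bexI[of _ "[]"]) (auto simp: LL_def)
next
  case (Cons i a)
  hence iw: "is_word a" and i01: "i \<in> {0,1}" by (auto simp: is_word_def)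
  from Cons.IH[OF iw] obtain c where c: "c \<in> set LL" "weval r0 r1 a = weval r0 r1 c"
    "\<forall>v. wact a v = wact c v" by blast
  show ?case
  proof (rule bexI[of _ "red i c"])
    show "red i c \<in> set LL" using red_ok[OF c(1) i01] by blast
    have "weval r0 r1 (i # a) = weval r0 r1 (i # c)" using c(2) by (simp add: weval_Cons)
    also have "\<dots> = weval r0 r1 (red i c)" using red_ok[OF c(1) i01] by blast
    finally show "weval r0 r1 (i # a) = weval r0 r1 (red i c) \<and> (\<forall>v. wact (i # a) v = wact (red i c) v)"
      using c(3) red_wact[OF c(1) i01] by (simp add: wact_Cons)
  qed
qed

lemma weval_append: "weval r0 r1 (xs @ ys) = weval r0 r1 xs * weval r0 r1 ys"
  by (induction xs) (simp_all add: weval_Cons weval_Nil mult.assoc)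

lemma inv: "is_word a \<Longrightarrow> weval r0 r1 a * weval r0 r1 (rev a) = 1 \<and> weval r0 r1 (rev a) * weval r0 r1 a = 1"
proof (induction a)
  case Nil
  then show ?case by (simp add: weval_Nil)
next
  case (Cons i a)
  hence iw: "is_word a" by (auto simp: is_word_def)
  note IH = Cons.IH[OF iw]
  let ?r = "if i = 0 then r0 else r1"
  have rr: "?r * ?r = 1" by (simp add: r00' r11')
  have re: "weval r0 r1 (rev (i # a)) = weval r0 r1 (rev a) * ?r"
    by (simp add: weval_append weval_Cons weval_Nil)
  have "weval r0 r1 (i # a) * weval r0 r1 (rev (i # a)) = ?r * (weval r0 r1 a * weval r0 r1 (rev a)) * ?r"
    by (simp only: re weval_Cons mult.assoc)
  also have "\<dots> = 1" using IH rr by simp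
  finally have 1: "weval r0 r1 (i # a) * weval r0 r1 (rev (i # a)) = 1" .
  have "weval r0 r1 (rev (i # a)) * weval r0 r1 (i # a) = weval r0 r1 (rev a) * (?r * ?r) * weval r0 r1 a"
    by (simp only: re weval_Cons mult.assoc)
  also have "\<dots> = 1" using IH rr by simp
  finally show ?case using 1 by simp
qed

lemma cases_ok:
  assumes "c \<in> set LL" "i \<in> {0,1::nat}" "wdot c (beta i) = beta i"
  shows "weval r0 r1 c * (if i = 0 then e0 else e1) * weval r0 r1 (rev c) = (if i = 0 then e0 else e1)"
  using assms unfolding LL_def
  apply (simp only: set_simps insert_iff empty_iff)
  apply (elim disjE)
  by (simp_all add: wdot_pos wdot_neg wact_Cons wact_Nil refl_def beta_def neg_root_def Psi_pos_def
        weval_Cons weval_Nil mult.assoc L0a L0b L0c L1a L1b L1c)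

end


theorem lemma9p4:
  fixes d r0 r1 e0 e1 :: "'a::ring_1"
  assumes "BrG2_rels d r0 r1 e0 e1"
    and "i \<in> {0, 1::nat}"
    and "a \<in> N_stab i"
  shows "weval r0 r1 a * (if i = 0 then e0 else e1) * weval r0 r1 (rev a)
           = (if i = 0 then e0 else e1)"
proof -
  have iw: "is_word a" and st: "wdot a (beta i) = beta i" using assms(3) by (auto simp: N_stab_def)
  obtain c where c: "c \<in> set LL" "weval r0 r1 a = weval r0 r1 c" "\<forall>v. wact a v = wact c v"
    using nf[OF assms(1) iw] by blast
  have "wdot a (beta i) = wdot c (beta i)" using spec[OF c(3), of "beta i"] unfolding wdot_def by simp
  hence stc: "wdot c (beta i) = beta i" using st by simp
  have cw: "is_word c" using c(1) by (auto simp: LL_def is_word_def)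
  have I1: "weval r0 r1 (rev a) * weval r0 r1 a = 1" using inv[OF assms(1) iw] by blast
  have I2: "weval r0 r1 c * weval r0 r1 (rev c) = 1" using inv[OF assms(1) cw] by blast
  have "weval r0 r1 (rev a) = weval r0 r1 (rev a) * (weval r0 r1 c * weval r0 r1 (rev c))"
    using I2 by simp
  also have "\<dots> = (weval r0 r1 (rev a) * weval r0 r1 a) * weval r0 r1 (rev c)"
    using c(2) by (simp add: mult.assoc)
  also have "\<dots> = weval r0 r1 (rev c)" using I1 by simp
  finally have ra: "weval r0 r1 (rev a) = weval r0 r1 (rev c)" .
  show ?thesis unfolding ra c(2) using cases_ok[OF assms(1) c(1) assms(2) stc] .
qed

end
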